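(* Let $a\in(0,1)$, $p\in(0,1)$, and let $(X_t)_{t=0,\dots,n}$ be a stationary Markov chain generated by the copula $C(u,v)=a\min(u,v)+(1-a)\max(u+v-1,0)$ and Bernoulli($p$) marginal distribution. If $a=p<1/2$ or $a=1-p\le1/2$, then $X_0,\dots,X_n$ are independent.
   Context: A stationary Markov chain $(X_t)$ is generated by a copula $C$ and a marginal cdf $F$ if each $X_t$ has cdf $F$ and $P(X_t\le x,X_{t+1}\le y)=C(F(x),F(y))$ for all $x,y$; Bernoulli($p$) means $P(X_t=1)=p=1-P(X_t=0)$. *)

theory Defs
  imports "HOL-Probability.Probability"
begin

definition copula_mix :: "real \<Rightarrow> real \<Rightarrow> real \<Rightarrow> real" where
  "copula_mix a u v = a * min u v + (1 - a) * max (u + v - 1) 0"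

definition bernoulli_cdf :: "real \<Rightarrow> real \<Rightarrow> real" where
  "bernoulli_cdf p x = (if x < 0 then 0 else if x < 1 then 1 - p else 1)"

text \<open>The Markov property is stated for (a.s. discretely valued) chains without division:
  P(X_0=x_0,..,X_{t+1}=x_{t+1}) P(X_t=x_t) = P(X_0=x_0,..,X_t=x_t) P(X_t=x_t, X_{t+1}=x_{t+1}).\<close>
definition stationary_markov_copula ::
  "'a measure \<Rightarrow> (nat \<Rightarrow> 'a \<Rightarrow> real) \<Rightarrow> nat \<Rightarrow> (real \<Rightarrow> real \<Rightarrow> real) \<Rightarrow> (real \<Rightarrow> real) \<Rightarrow> bool"
where
  "stationary_markov_copula M X n C F \<longleftrightarrow>
     prob_space M \<and>
     (\<forall>t\<le>n. X t \<in> borel_measurable M) \<and>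
     (\<forall>t\<le>n. \<forall>x. measure M {\<omega>\<in>space M. X t \<omega> \<le> x} = F x) \<and>
     (\<forall>t<n. \<forall>x y. measure M {\<omega>\<in>space M. X t \<omega> \<le> x \<and> X (Suc t) \<omega> \<le> y} = C (F x) (F y)) \<and>
     (\<forall>t<n. \<forall>x :: nat \<Rightarrow> real.
        measure M {\<omega>\<in>space M. \<forall>i\<le>Suc t. X i \<omega> = x i} * measure M {\<omega>\<in>space M. X t \<omega> = x t}
        = measure M {\<omega>\<in>space M. \<forall>i\<le>t. X i \<omega> = x i}
          * measure M {\<omega>\<in>space M. X t \<omega> = x t \<and> X (Suc t) \<omega> = x (Suc t)})"

end

theory Submission
  imports Defs
begin


lemma (in prob_space) ev_all:
  fixes X :: "nat \<Rightarrow> 'a \<Rightarrow> real"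
  assumes "\<And>t. t \<le> n \<Longrightarrow> X t \<in> borel_measurable M" "\<And>i. i \<le> n \<Longrightarrow> B i \<in> sets borel"
  shows "{\<omega>\<in>space M. \<forall>i\<le>n. X i \<omega> \<in> B i} \<in> events"
proof -
  have ev1: "{\<omega>\<in>space M. X i \<omega> \<in> B i} \<in> events" if "i \<in> {..n}" for i
  proof -
    have "X i -` B i \<inter> space M \<in> events"
      using that by (intro measurable_sets[OF assms(1) assms(2)]) auto
    moreover have "X i -` B i \<inter> space M = {\<omega>\<in>space M. X i \<omega> \<in> B i}" by blast
    ultimately show ?thesis by simp
  qed
  have "{\<omega>\<in>space M. \<forall>i\<in>{..n}. X i \<omega> \<in> B i} \<in> events"
    by (rule sets.sets_Collect_finite_All[OF ev1]) simp_all
  then show ?thesis unfolding Ball_def atMost_iff .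
qed

lemma (in prob_space) ev1:
  assumes "f \<in> borel_measurable M" "B \<in> sets borel"
  shows "{\<omega>\<in>space M. f \<omega> \<in> B} \<in> events"
proof -
  have "f -` B \<inter> space M \<in> events" by (rule measurable_sets[OF assms])
  moreover have "f -` B \<inter> space M = {\<omega>\<in>space M. f \<omega> \<in> B}" by blast
  ultimately show ?thesis by simp
qed

lemma (in prob_space) key:
  fixes X :: "nat \<Rightarrow> 'a \<Rightarrow> real" and q :: "real \<Rightarrow> real"
  assumes meas: "\<And>t. t \<le> n \<Longrightarrow> X t \<in> borel_measurable M"
    and ae: "AE \<omega> in M. \<forall>t\<le>n. X t \<omega> \<in> V" and finV: "finite V"
    and pt: "\<And>x. (\<forall>i\<le>n. x i \<in> V) \<Longrightarrow> prob {\<omega>\<in>space M. \<forall>i\<le>n. X i \<omega> = x i} = (\<Prod>i\<le>n. q (x i))"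
    and marg: "\<And>t v. t \<le> n \<Longrightarrow> v \<in> V \<Longrightarrow> prob {\<omega>\<in>space M. X t \<omega> = v} = q v"
  shows "indep_vars (\<lambda>_. borel) X {0..n}"
proof -
  have evB: "{\<omega>\<in>space M. X t \<omega> \<in> B} \<in> events" if "t \<le> n" "B \<in> sets borel" for t B
    by (rule ev1[OF meas[OF that(1)] that(2)])
  have evpt: "{\<omega>\<in>space M. X t \<omega> = v} \<in> events" if "t \<le> n" for t v
  proof -
    have "{\<omega>\<in>space M. X t \<omega> \<in> {v}} \<in> events" by (rule evB[OF that]) simp
    then show ?thesis unfolding singleton_iff .
  qed
  have setsum: "prob {\<omega>\<in>space M. X t \<omega> \<in> B} = (\<Sum>v\<in>B\<inter>V. q v)" if "t \<le> n" "B \<in> sets borel" for t B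
  proof -
    have "prob {\<omega>\<in>space M. X t \<omega> \<in> B} = prob (\<Union>v\<in>B\<inter>V. {\<omega>\<in>space M. X t \<omega> = v})"
      apply (rule measure_eq_AE)
      apply (rule AE_mp[OF ae], rule AE_I2) using that apply auto[1]
      using evB[OF that] apply simp
      by (intro sets.finite_UN evpt that(1)) (use finV in simp)
    also have "\<dots> = (\<Sum>v\<in>B\<inter>V. prob {\<omega>\<in>space M. X t \<omega> = v})"
      apply (rule measure_finite_Union)
      using finV evpt that by (auto simp: disjoint_family_on_def)
    also have "\<dots> = (\<Sum>v\<in>B\<inter>V. q v)" using marg that by auto
    finally show ?thesis .
  qed
  have joint: "prob {\<omega>\<in>space M. \<forall>i\<le>n. X i \<omega> \<in> B i} = (\<Prod>i\<le>n. prob {\<omega>\<in>space M. X i \<omega> \<in> B i})"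
    if B: "\<And>i. i \<le> n \<Longrightarrow> B i \<in> sets borel" for B
  proof -
    let ?P = "PiE {..n} (\<lambda>i. B i \<inter> V)"
    have finP: "finite ?P" using finV by (auto intro!: finite_PiE)
    have evx: "{\<omega>\<in>space M. \<forall>i\<le>n. X i \<omega> = x i} \<in> events" for x
    proof -
      have "{\<omega>\<in>space M. \<forall>i\<le>n. X i \<omega> \<in> {x i}} \<in> events" by (rule ev_all[OF meas]) simp_all
      then show ?thesis unfolding singleton_iff .
    qed
    have "prob {\<omega>\<in>space M. \<forall>i\<le>n. X i \<omega> \<in> B i} = prob (\<Union>x\<in>?P. {\<omega>\<in>space M. \<forall>i\<le>n. X i \<omega> = x i})"
    proof (rule measure_eq_AE)
      show "AE \<omega> in M. (\<omega> \<in> {\<omega>\<in>space M. \<forall>i\<le>n. X i \<omega> \<in> B i}) = (\<omega> \<in> (\<Union>x\<in>?P. {\<omega>\<in>space M. \<forall>i\<le>n. X i \<omega> = x i}))"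
        using ae
      proof (rule AE_mp, intro AE_I2 impI)
        fix \<omega> assume "\<omega> \<in> space M" and V: "\<forall>t\<le>n. X t \<omega> \<in> V"
        show "(\<omega> \<in> {\<omega>\<in>space M. \<forall>i\<le>n. X i \<omega> \<in> B i}) = (\<omega> \<in> (\<Union>x\<in>?P. {\<omega>\<in>space M. \<forall>i\<le>n. X i \<omega> = x i}))"
        proof
          assume "\<omega> \<in> {\<omega>\<in>space M. \<forall>i\<le>n. X i \<omega> \<in> B i}"
          then have "restrict (\<lambda>i. X i \<omega>) {..n} \<in> ?P" using V by auto
          then show "\<omega> \<in> (\<Union>x\<in>?P. {\<omega>\<in>space M. \<forall>i\<le>n. X i \<omega> = x i})"
            using \<open>\<omega> \<in> space M\<close> by (intro UN_I[of "restrict (\<lambda>i. X i \<omega>) {..n}"]) auto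
        next
          assume "\<omega> \<in> (\<Union>x\<in>?P. {\<omega>\<in>space M. \<forall>i\<le>n. X i \<omega> = x i})"
          then obtain x where x: "x \<in> ?P" "\<forall>i\<le>n. X i \<omega> = x i" by blast
          have "\<forall>i\<le>n. X i \<omega> \<in> B i"
          proof (intro allI impI)
            fix i assume "i \<le> n"
            then have "x i \<in> B i \<inter> V" using PiE_mem[OF x(1)] by simp
            then show "X i \<omega> \<in> B i" using x(2) \<open>i \<le> n\<close> by simp
          qed
          then show "\<omega> \<in> {\<omega>\<in>space M. \<forall>i\<le>n. X i \<omega> \<in> B i}" using \<open>\<omega> \<in> space M\<close> by simp
        qed
      qed
      show "{\<omega>\<in>space M. \<forall>i\<le>n. X i \<omega> \<in> B i} \<in> events" by (rule ev_all[OF meas B])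
      show "(\<Union>x\<in>?P. {\<omega>\<in>space M. \<forall>i\<le>n. X i \<omega> = x i}) \<in> events"
        by (intro sets.finite_UN evx finP)
    qed
    also have "\<dots> = (\<Sum>x\<in>?P. prob {\<omega>\<in>space M. \<forall>i\<le>n. X i \<omega> = x i})"
    proof (rule measure_finite_Union)
      show "disjoint_family_on (\<lambda>x. {\<omega>\<in>space M. \<forall>i\<le>n. X i \<omega> = x i}) ?P"
        unfolding disjoint_family_on_def
      proof (intro ballI impI)
        fix x y assume "x \<in> ?P" "y \<in> ?P" "x \<noteq> y"
        from \<open>x \<noteq> y\<close> obtain i where ne: "x i \<noteq> y i" by (auto simp: fun_eq_iff)
        have "i \<le> n"
        proof (rule ccontr)
          assume "\<not> i \<le> n"
          then have "x i = undefined" "y i = undefined"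
            using PiE_arb[OF \<open>x \<in> ?P\<close>] PiE_arb[OF \<open>y \<in> ?P\<close>] by auto
          with ne show False by simp
        qed
        note this ne
        then show "{\<omega>\<in>space M. \<forall>i\<le>n. X i \<omega> = x i} \<inter> {\<omega>\<in>space M. \<forall>i\<le>n. X i \<omega> = y i} = {}"
          by auto
      qed
      show "finite ?P" by (rule finP)
      show "(\<lambda>x. {\<omega>\<in>space M. \<forall>i\<le>n. X i \<omega> = x i}) ` ?P \<subseteq> events" using evx by blast
      show "\<And>x. emeasure M {\<omega>\<in>space M. \<forall>i\<le>n. X i \<omega> = x i} \<noteq> \<infinity>"
        by (simp add: emeasure_eq_measure)
    qed
    also have "\<dots> = (\<Sum>x\<in>?P. \<Prod>i\<le>n. q (x i))"
      by (intro sum.cong refl pt) (auto simp: PiE_def Pi_def)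
    also have "\<dots> = (\<Prod>i\<le>n. \<Sum>v\<in>B i \<inter> V. q v)"
      by (rule prod_sum_PiE[symmetric]) (use finV in auto)
    also have "\<dots> = (\<Prod>i\<le>n. prob {\<omega>\<in>space M. X i \<omega> \<in> B i})"
      using setsum B by auto
    finally show ?thesis .
  qed
  show ?thesis
    unfolding indep_vars_def2 indep_sets_def
  proof (intro conjI ballI allI impI)
    fix i assume "i \<in> {0..n}" then show "random_variable borel (X i)" using meas by auto
  next
    fix i assume "i \<in> {0..n}"
    show "{X i -` A \<inter> space M |A. A \<in> sets borel} \<subseteq> events"
    proof (rule subsetI)
      fix E assume "E \<in> {X i -` A \<inter> space M |A. A \<in> sets borel}"
      then obtain A where A: "A \<in> sets borel" "E = X i -` A \<inter> space M" by blast
      have "X i -` A \<inter> space M \<in> events" by (rule measurable_sets[OF meas A(1)]) (use \<open>i \<in> {0..n}\<close> in simp)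
      then show "E \<in> events" by (simp only: A(2))
    qed
  next
    fix J and A :: "nat \<Rightarrow> 'a set"
    assume J: "J \<subseteq> {0..n}" "J \<noteq> {}" "finite J"
      and A: "A \<in> Pi J (\<lambda>i. {X i -` A \<inter> space M |A. A \<in> sets borel})"
    then have "\<forall>j\<in>J. \<exists>B. B \<in> sets borel \<and> A j = X j -` B \<inter> space M" by (auto simp: Pi_iff)
    then obtain B where B: "\<And>j. j \<in> J \<Longrightarrow> B j \<in> sets borel \<and> A j = X j -` B j \<inter> space M"
      by metis
    define B' where "B' i = (if i \<in> J then B i else UNIV)" for i
    have B': "\<And>i. i \<le> n \<Longrightarrow> B' i \<in> sets borel" using B by (auto simp: B'_def)
    have "(\<Inter>j\<in>J. A j) = {\<omega>\<in>space M. \<forall>i\<le>n. X i \<omega> \<in> B' i}"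
      using J B by (auto simp: B'_def)
    then have "prob (\<Inter>j\<in>J. A j) = (\<Prod>i\<le>n. prob {\<omega>\<in>space M. X i \<omega> \<in> B' i})"
      using joint[OF B'] by simp
    also have "\<dots> = (\<Prod>j\<in>J. prob {\<omega>\<in>space M. X j \<omega> \<in> B' j})"
      apply (rule prod.mono_neutral_right)
      using J by (auto simp: B'_def prob_space)
    also have "\<dots> = (\<Prod>j\<in>J. prob (A j))"
      using B by (intro prod.cong refl) (auto simp: B'_def Int_def vimage_def conj_commute)
    finally show "prob (\<Inter>j\<in>J. A j) = (\<Prod>j\<in>J. prob (A j))" .
  qed
qed



lemma (in prob_space) ev_le:
  fixes f :: "'a \<Rightarrow> real"
  assumes "f \<in> borel_measurable M"
  shows "{\<omega>\<in>space M. f \<omega> \<le> c} \<in> events"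
proof -
  have "{\<omega>\<in>space M. f \<omega> \<in> {..c}} \<in> events" by (rule ev1[OF assms], rule borel_closed) simp
  then show ?thesis unfolding atMost_iff .
qed

lemma (in prob_space) ev_eq:
  fixes f :: "'a \<Rightarrow> real"
  assumes "f \<in> borel_measurable M"
  shows "{\<omega>\<in>space M. f \<omega> = c} \<in> events"
proof -
  have "{\<omega>\<in>space M. f \<omega> \<in> {c}} \<in> events" by (rule ev1[OF assms], rule borel_closed) simp
  then show ?thesis unfolding singleton_iff .
qed

lemma (in prob_space) null_of:
  assumes "A \<in> events" "prob A = 0"
  shows "A \<in> null_sets M"
  using assms by (simp add: null_sets_def emeasure_eq_measure)

lemma (in prob_space) ae01:
  fixes Y :: "'a \<Rightarrow> real"
  assumes meas: "Y \<in> borel_measurable M"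
    and cdf: "\<And>x. prob {\<omega>\<in>space M. Y \<omega> \<le> x} = bernoulli_cdf p x"
  shows "AE \<omega> in M. Y \<omega> \<in> {0,1}"
proof -
  define N1 where "N1 = (\<Union>k::nat. {\<omega>\<in>space M. Y \<omega> \<le> - inverse (real (Suc k))})"
  define N2 where "N2 = (\<Union>k::nat. {\<omega>\<in>space M. Y \<omega> \<le> 1 - inverse (real (Suc k))} - {\<omega>\<in>space M. Y \<omega> \<le> 0})"
  define N3 where "N3 = space M - {\<omega>\<in>space M. Y \<omega> \<le> 1}"
  have n1: "N1 \<in> null_sets M" unfolding N1_def
  proof (rule null_sets_UN)
    fix k :: nat
    show "{\<omega>\<in>space M. Y \<omega> \<le> - inverse (real (Suc k))} \<in> null_sets M"
      by (rule null_of[OF ev_le[OF meas]]) (simp add: cdf bernoulli_cdf_def)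
  qed
  have n2: "N2 \<in> null_sets M" unfolding N2_def
  proof (rule null_sets_UN)
    fix k :: nat
    have ss: "{\<omega>\<in>space M. Y \<omega> \<le> 0} \<subseteq> {\<omega>\<in>space M. Y \<omega> \<le> 1 - inverse (real (Suc k))}"
    proof -
      have "inverse (real (Suc k)) \<le> 1" by (simp add: field_simps)
      then show ?thesis by auto
    qed
    have "prob ({\<omega>\<in>space M. Y \<omega> \<le> 1 - inverse (real (Suc k))} - {\<omega>\<in>space M. Y \<omega> \<le> 0})
        = prob {\<omega>\<in>space M. Y \<omega> \<le> 1 - inverse (real (Suc k))} - prob {\<omega>\<in>space M. Y \<omega> \<le> 0}"
      by (rule finite_measure_Diff[OF ev_le[OF meas] ev_le[OF meas] ss])
    also have "\<dots> = 0"
    proof -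
      have "inverse (real (Suc k)) \<le> 1" by (simp add: field_simps)
      moreover have "inverse (real (Suc k)) > 0" by simp
      ultimately show ?thesis by (simp add: cdf bernoulli_cdf_def)
    qed
    finally show "{\<omega>\<in>space M. Y \<omega> \<le> 1 - inverse (real (Suc k))} - {\<omega>\<in>space M. Y \<omega> \<le> 0} \<in> null_sets M"
      by (intro null_of sets.Diff ev_le meas)
  qed
  have n3: "N3 \<in> null_sets M" unfolding N3_def
    by (rule null_of) (auto intro!: sets.Diff ev_le meas simp: prob_compl[OF ev_le[OF meas]] cdf bernoulli_cdf_def)
  show ?thesis
  proof (rule AE_I')
    show "N1 \<union> N2 \<union> N3 \<in> null_sets M" using n1 n2 n3 by blast
    show "{\<omega> \<in> space M. \<not> Y \<omega> \<in> {0, 1}} \<subseteq> N1 \<union> N2 \<union> N3"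
    proof
      fix \<omega> assume w: "\<omega> \<in> {\<omega> \<in> space M. \<not> Y \<omega> \<in> {0, 1}}"
      then have sp: "\<omega> \<in> space M" and ne: "Y \<omega> \<noteq> 0" "Y \<omega> \<noteq> 1" by auto
      consider "Y \<omega> < 0" | "0 < Y \<omega> \<and> Y \<omega> < 1" | "Y \<omega> > 1" using ne by linarith
      then show "\<omega> \<in> N1 \<union> N2 \<union> N3"
      proof cases
        case 1
        then obtain k where "inverse (real (Suc k)) < - Y \<omega>" using reals_Archimedean[of "- Y \<omega>"] by auto
        then have "\<omega> \<in> N1" unfolding N1_def using sp by (auto intro!: exI[of _ k])
        then show ?thesis by blast
      next
        case 2
        then obtain k where "inverse (real (Suc k)) < 1 - Y \<omega>" using reals_Archimedean[of "1 - Y \<omega>"] by auto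
        then have "\<omega> \<in> N2" unfolding N2_def using sp 2 by (auto intro!: exI[of _ k])
        then show ?thesis by blast
      next
        case 3
        then have "\<omega> \<in> N3" unfolding N3_def using sp by auto
        then show ?thesis by blast
      qed
    qed
  qed
qed



lemma copula_val:
  assumes "0 < p" "p < 1" "(a = p \<and> p < 1/2) \<or> (a = 1 - p \<and> a \<le> 1/2)"
  shows "copula_mix a (1 - p) (1 - p) = (1 - p) * (1 - p)"
  using assms(3)
proof
  assume h: "a = p \<and> p < 1/2"
  then have "max (1 - p + (1 - p) - 1) 0 = 1 - 2 * p" by (simp add: max_def)
  then show ?thesis using h unfolding copula_mix_def by (simp add: algebra_simps)
next
  assume h: "a = 1 - p \<and> a \<le> 1/2"
  then have mx: "max (1 - p + (1 - p) - 1) 0 = 0" by (simp add: max_def)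
  from h have a: "a = 1 - p" by simp
  have "copula_mix a (1 - p) (1 - p) = (1 - p) * min (1 - p) (1 - p) + (1 - (1 - p)) * max (1 - p + (1 - p) - 1) 0"
    unfolding copula_mix_def a by simp
  then show ?thesis using mx by simp
qed

theorem proposition5:
  fixes M :: "'a measure" and X :: "nat \<Rightarrow> 'a \<Rightarrow> real" and n :: nat and a p :: real
  assumes "0 < a" "a < 1" "0 < p" "p < 1"
    and "stationary_markov_copula M X n (copula_mix a) (bernoulli_cdf p)"
    and "(a = p \<and> p < 1/2) \<or> (a = 1 - p \<and> a \<le> 1/2)"
  shows "prob_space.indep_vars M (\<lambda>_. borel) X {0..n}"
proof -
  note S = assms(5)[unfolded stationary_markov_copula_def]
  interpret prob_space M using S by blast
  have meas: "\<And>t. t \<le> n \<Longrightarrow> X t \<in> borel_measurable M" using S by blast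
  have cdf: "\<And>t x. t \<le> n \<Longrightarrow> prob {\<omega>\<in>space M. X t \<omega> \<le> x} = bernoulli_cdf p x" using S by blast
  have jcdf: "\<And>t x y. t < n \<Longrightarrow> prob {\<omega>\<in>space M. X t \<omega> \<le> x \<and> X (Suc t) \<omega> \<le> y}
      = copula_mix a (bernoulli_cdf p x) (bernoulli_cdf p y)" using S by blast
  have markov: "\<And>t x. t < n \<Longrightarrow>
        prob {\<omega>\<in>space M. \<forall>i\<le>Suc t. X i \<omega> = x i} * prob {\<omega>\<in>space M. X t \<omega> = x t}
        = prob {\<omega>\<in>space M. \<forall>i\<le>t. X i \<omega> = x i}
          * prob {\<omega>\<in>space M. X t \<omega> = x t \<and> X (Suc t) \<omega> = x (Suc t)}" using S by blast
  define V :: "real set" where "V = {0, 1}"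
  define q where "q v = (if v = 1 then p else 1 - p)" for v :: real
  have qpos: "q v > 0" for v using assms(3,4) by (simp add: q_def)
  have ae1: "AE \<omega> in M. X t \<omega> \<in> V" if "t \<le> n" for t
    unfolding V_def by (rule ae01[OF meas[OF that] cdf[OF that]])
  have ae: "AE \<omega> in M. \<forall>t\<le>n. X t \<omega> \<in> V"
  proof -
    have "AE \<omega> in M. \<forall>t\<in>{..n}. X t \<omega> \<in> V" by (rule AE_finite_allI) (use ae1 in auto)
    then show ?thesis unfolding Ball_def atMost_iff .
  qed
  have m0: "prob {\<omega>\<in>space M. X t \<omega> = 0} = 1 - p" if "t \<le> n" for t
  proof -
    have "prob {\<omega>\<in>space M. X t \<omega> = 0} = prob {\<omega>\<in>space M. X t \<omega> \<le> 0}"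
      apply (rule measure_eq_AE)
        apply (rule AE_mp[OF ae1[OF that]], rule AE_I2) apply (force simp: V_def)
      by (rule ev_eq[OF meas[OF that]], rule ev_le[OF meas[OF that]])
    also have "\<dots> = 1 - p" by (simp add: cdf[OF that] bernoulli_cdf_def)
    finally show ?thesis .
  qed
  have m1: "prob {\<omega>\<in>space M. X t \<omega> = 1} = p" if "t \<le> n" for t
  proof -
    have "prob {\<omega>\<in>space M. X t \<omega> = 1} = prob (space M - {\<omega>\<in>space M. X t \<omega> \<le> 0})"
      apply (rule measure_eq_AE)
        apply (rule AE_mp[OF ae1[OF that]], rule AE_I2) apply (force simp: V_def)
      by (rule ev_eq[OF meas[OF that]], rule sets.compl_sets, rule ev_le[OF meas[OF that]])
    also have "\<dots> = p" by (simp add: prob_compl[OF ev_le[OF meas[OF that]]] cdf[OF that] bernoulli_cdf_def)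
    finally show ?thesis .
  qed
  have marg: "prob {\<omega>\<in>space M. X t \<omega> = v} = q v" if "t \<le> n" "v \<in> V" for t v
    using that m0 m1 by (auto simp: V_def q_def)
  have pair: "prob {\<omega>\<in>space M. X t \<omega> = u \<and> X (Suc t) \<omega> = v} = q u * q v"
    if t: "t < n" "u \<in> V" "v \<in> V" for t u v
  proof -
    have t1: "t \<le> n" "Suc t \<le> n" using t by auto
    note mt = meas[OF t1(1)] and ms = meas[OF t1(2)]
    have aet: "AE \<omega> in M. X t \<omega> \<in> V \<and> X (Suc t) \<omega> \<in> V"
      using ae1[OF t1(1)] ae1[OF t1(2)] by eventually_elim simp
    have ev00: "{\<omega>\<in>space M. X t \<omega> \<le> 0 \<and> X (Suc t) \<omega> \<le> 0} \<in> events"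
      by (intro sets.sets_Collect_conj ev_le mt ms)
    have evc: "{\<omega>\<in>space M. X t \<omega> = c \<and> X (Suc t) \<omega> = d} \<in> events" for c d
      by (intro sets.sets_Collect_conj ev_eq mt ms)
    have p00: "prob {\<omega>\<in>space M. X t \<omega> = 0 \<and> X (Suc t) \<omega> = 0} = (1 - p) * (1 - p)"
    proof -
      have "prob {\<omega>\<in>space M. X t \<omega> = 0 \<and> X (Suc t) \<omega> = 0} = prob {\<omega>\<in>space M. X t \<omega> \<le> 0 \<and> X (Suc t) \<omega> \<le> 0}"
        apply (rule measure_eq_AE)
          apply (rule AE_mp[OF aet], rule AE_I2) apply (force simp: V_def)
        by (rule evc, rule ev00)
      also have "\<dots> = (1 - p) * (1 - p)"
        using jcdf[OF t(1), of 0 0] copula_val[OF assms(3,4,6)] by (simp add: bernoulli_cdf_def)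
      finally show ?thesis .
    qed
    have p01: "prob {\<omega>\<in>space M. X t \<omega> = 0 \<and> X (Suc t) \<omega> = 1} = (1 - p) * p"
    proof -
      have "prob {\<omega>\<in>space M. X t \<omega> = 0 \<and> X (Suc t) \<omega> = 1}
          = prob ({\<omega>\<in>space M. X t \<omega> \<le> 0} - {\<omega>\<in>space M. X t \<omega> \<le> 0 \<and> X (Suc t) \<omega> \<le> 0})"
        apply (rule measure_eq_AE)
          apply (rule AE_mp[OF aet], rule AE_I2) apply (force simp: V_def)
        by (rule evc, rule sets.Diff, rule ev_le[OF mt], rule ev00)
      also have "\<dots> = prob {\<omega>\<in>space M. X t \<omega> \<le> 0} - prob {\<omega>\<in>space M. X t \<omega> \<le> 0 \<and> X (Suc t) \<omega> \<le> 0}"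
        by (rule finite_measure_Diff[OF ev_le[OF mt] ev00]) blast
      also have "\<dots> = (1 - p) * p"
        using jcdf[OF t(1), of 0 0] copula_val[OF assms(3,4,6)] cdf[OF t1(1), of 0]
        by (simp add: bernoulli_cdf_def algebra_simps)
      finally show ?thesis .
    qed
    have p10: "prob {\<omega>\<in>space M. X t \<omega> = 1 \<and> X (Suc t) \<omega> = 0} = p * (1 - p)"
    proof -
      have "prob {\<omega>\<in>space M. X t \<omega> = 1 \<and> X (Suc t) \<omega> = 0}
          = prob ({\<omega>\<in>space M. X (Suc t) \<omega> \<le> 0} - {\<omega>\<in>space M. X t \<omega> \<le> 0 \<and> X (Suc t) \<omega> \<le> 0})"
        apply (rule measure_eq_AE)
          apply (rule AE_mp[OF aet], rule AE_I2) apply (force simp: V_def)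
        by (rule evc, rule sets.Diff, rule ev_le[OF ms], rule ev00)
      also have "\<dots> = prob {\<omega>\<in>space M. X (Suc t) \<omega> \<le> 0} - prob {\<omega>\<in>space M. X t \<omega> \<le> 0 \<and> X (Suc t) \<omega> \<le> 0}"
        by (rule finite_measure_Diff[OF ev_le[OF ms] ev00]) blast
      also have "\<dots> = p * (1 - p)"
        using jcdf[OF t(1), of 0 0] copula_val[OF assms(3,4,6)] cdf[OF t1(2), of 0]
        by (simp add: bernoulli_cdf_def algebra_simps)
      finally show ?thesis .
    qed
    have p11: "prob {\<omega>\<in>space M. X t \<omega> = 1 \<and> X (Suc t) \<omega> = 1} = p * p"
    proof -
      have "prob {\<omega>\<in>space M. X t \<omega> = 1 \<and> X (Suc t) \<omega> = 1}
          = prob ({\<omega>\<in>space M. X (Suc t) \<omega> = 1} - {\<omega>\<in>space M. X t \<omega> = 0 \<and> X (Suc t) \<omega> = 1})"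
        apply (rule measure_eq_AE)
          apply (rule AE_mp[OF aet], rule AE_I2) apply (force simp: V_def)
        by (rule evc, rule sets.Diff, rule ev_eq[OF ms], rule evc)
      also have "\<dots> = prob {\<omega>\<in>space M. X (Suc t) \<omega> = 1} - prob {\<omega>\<in>space M. X t \<omega> = 0 \<and> X (Suc t) \<omega> = 1}"
        by (rule finite_measure_Diff[OF ev_eq[OF ms] evc]) blast
      also have "\<dots> = p * p"
        using m1[OF t1(2)] p01 by (simp add: algebra_simps)
      finally show ?thesis .
    qed
    show ?thesis using t(2,3) p00 p01 p10 p11 by (auto simp: V_def q_def)
  qed
  have ptm: "prob {\<omega>\<in>space M. \<forall>i\<le>m. X i \<omega> = x i} = (\<Prod>i\<le>m. q (x i))"
    if "m \<le> n" "\<forall>i\<le>m. x i \<in> V" for m x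
    using that
  proof (induction m)
    case 0
    have "{\<omega>\<in>space M. \<forall>i\<le>0. X i \<omega> = x i} = {\<omega>\<in>space M. X 0 \<omega> = x 0}" by auto
    then show ?case using marg[of 0 "x 0"] 0 by simp
  next
    case (Suc m)
    have IH: "prob {\<omega>\<in>space M. \<forall>i\<le>m. X i \<omega> = x i} = (\<Prod>i\<le>m. q (x i))"
      using Suc by auto
    have mk: "prob {\<omega>\<in>space M. \<forall>i\<le>Suc m. X i \<omega> = x i} * q (x m)
        = (\<Prod>i\<le>m. q (x i)) * (q (x m) * q (x (Suc m)))"
      using markov[of m x] Suc.prems IH marg[of m "x m"] pair[of m "x m" "x (Suc m)"] by auto
    have "prob {\<omega>\<in>space M. \<forall>i\<le>Suc m. X i \<omega> = x i} = (\<Prod>i\<le>m. q (x i)) * q (x (Suc m))"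
      using mk qpos[of "x m"] by (simp add: algebra_simps)
    then show ?case by simp
  qed
  show ?thesis
    by (rule key[OF meas ae _ ptm marg]) (auto simp: V_def)
qed

end
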